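(* Let $\alpha>-1$ and define $c_1^*(\alpha,x)=0$ and, for $i=1,2,3,\ldots$, $$c_{2i}^*(\alpha,x)=\frac{4(-1)^{i+1}}{(2i)!}\binom{\alpha+1}{i-1}\,{}_2F_1\!\left(\begin{matrix}-i+1,\;\alpha+\frac52-i\\ \frac12\end{matrix};x^2\right),$$ $$c_{2i+1}^*(\alpha,x)=\frac{8(-1)^{i+1}}{(2i+1)!}\binom{\alpha}{i-1}(\alpha+1)\,x\,{}_2F_1\!\left(\begin{matrix}-i+1,\;\alpha+\frac52-i\\ \frac32\end{matrix};x^2\right).$$ Then $$\sum_{i=1}^\infty c_i^*(\alpha,-1)=2\,{}_1F_1\!\left(\begin{matrix}-\alpha-1\\ 3\end{matrix};2\right),\qquad \sum_{i=1}^\infty c_i^*(\alpha,1)=2\,{}_1F_1\!\left(\begin{matrix}-\alpha-1\\ 3\end{matrix};-2\right).$$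
   Context: $(a)_k$ is the Pochhammer symbol, $\binom{\gamma}{m}$ the generalized binomial coefficient, ${}_2F_1$ and ${}_1F_1$ the standard hypergeometric series $\sum_k\frac{(a)_k(b)_k}{(c)_k}\frac{z^k}{k!}$ and $\sum_k\frac{(a)_k}{(b)_k}\frac{z^k}{k!}$; the ${}_2F_1$'s above terminate. *)

theory Defs
  imports "HOL-Analysis.Analysis"
begin

definition hyp2F1 :: "real \<Rightarrow> real \<Rightarrow> real \<Rightarrow> real \<Rightarrow> real" where
  "hyp2F1 a b c z =
     (\<Sum>k. pochhammer a k * pochhammer b k / pochhammer c k * z ^ k / fact k)"

definition hyp1F1 :: "real \<Rightarrow> real \<Rightarrow> real \<Rightarrow> real" where
  "hyp1F1 a b z = (\<Sum>k. pochhammer a k / pochhammer b k * z ^ k / fact k)"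

text \<open>The coefficients c_n^*(alpha,x), n \<ge> 1 (c_1^* = 0; the value at n = 0 is
  irrelevant and set to 0). For n = 2i and n = 2i+1 with i \<ge> 1 as in the paper.\<close>
definition cstar :: "real \<Rightarrow> real \<Rightarrow> nat \<Rightarrow> real" where
  "cstar \<alpha> x n =
     (if n \<le> 1 then 0
      else if even n then
        (let i = n div 2 in
          4 * (-1) ^ (i + 1) / fact (2 * i) * ((\<alpha> + 1) gchoose (i - 1))
            * hyp2F1 (- real i + 1) (\<alpha> + 5 / 2 - real i) (1 / 2) (x ^ 2))
      else
        (let i = n div 2 in
          8 * (-1) ^ (i + 1) / fact (2 * i + 1) * (\<alpha> gchoose (i - 1)) * (\<alpha> + 1) * x
            * hyp2F1 (- real i + 1) (\<alpha> + 5 / 2 - real i) (3 / 2) (x ^ 2)))"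

end

theory Submission
  imports Defs "HOL-Computational_Algebra.Formal_Power_Series"
begin

lemma cv:
  fixes b c :: real and m :: nat
  assumes "c > 0"
  shows "hyp2F1 (- real m) b c 1 = pochhammer (c - b) m / pochhammer c m"
proof -
  let ?f = "\<lambda>k. pochhammer (- real m) k * pochhammer b k / pochhammer c k * 1 ^ k / fact k"
  have "?f sums (\<Sum>k\<in>{0..m}. ?f k)"
    by (rule sums_finite) (auto simp: pochhammer_of_nat_eq_0_lemma)
  moreover have "(\<Sum>k\<in>{0..m}. ?f k) = (\<Sum>k\<in>{0..m}. (pochhammer b k * pochhammer (- (of_nat m)) k) /
    (of_nat (fact k) * pochhammer c k))"
    by (rule sum.cong) (auto simp: field_simps)
  moreover have "\<forall>i \<in> {0..< m}. c \<noteq> - of_nat i" using assms by auto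
  note Vandermonde_pochhammer[OF this, of b]
  ultimately show ?thesis unfolding hyp2F1_def by (simp add: sums_iff)
qed

lemma fact_SS3: "fact (Suc (Suc k)) = (2::real) * pochhammer 3 k"
  by (simp add: pochhammer_fact pochhammer_rec numeral_3_eq_3 numeral_2_eq_2)

lemma fact_odd: "fact (2*m+1) = (4::real)^m * fact m * pochhammer (3/2) m"
proof -
  have "fact (2*m+1) = pochhammer (1::real) (Suc (2*m))" by (simp add: pochhammer_fact)
  also have "... = pochhammer (2 * 1) (2*m)" by (simp add: pochhammer_rec)
  also have "... = of_nat (2^(2*m)) * pochhammer 1 m * pochhammer (1+1/2) m"
    by (rule pochhammer_double)
  finally show ?thesis by (simp add: pochhammer_fact power_mult)
qed

lemma even_term:
  fixes \<alpha> x :: real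
  assumes x: "x^2 = 1"
  shows "cstar \<alpha> x (2*m+2) = 2 * (pochhammer (-\<alpha>-1) (2*m) / pochhammer 3 (2*m) * (-2*x)^(2*m) / fact (2*m))"
proof -
  have e: "(2*m+2) div 2 = Suc m" by simp
  have h: "hyp2F1 (- real (Suc m) + 1) (\<alpha> + 5 / 2 - real (Suc m)) (1 / 2) (x ^ 2)
      = pochhammer (real m - (\<alpha>+1)) m / pochhammer (1/2) m"
    using cv[of "1/2" m "\<alpha> + 5 / 2 - real (Suc m)"] x by (simp add: algebra_simps)
  have l: "cstar \<alpha> x (2*m+2) = 4 * (-1) ^ (Suc m + 1) / fact (2 * Suc m) * ((\<alpha> + 1) gchoose m)
      * (pochhammer (real m - (\<alpha>+1)) m / pochhammer (1/2) m)"
    unfolding cstar_def using h by (simp add: e Let_def)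
  have p2: "pochhammer (-\<alpha>-1) (2*m) = pochhammer (-(\<alpha>+1)) m * pochhammer (real m - (\<alpha>+1)) m"
  proof -
    have e: "-\<alpha>-1 = -(\<alpha>+1)" by simp
    have "pochhammer (-(\<alpha>+1)) (m+m) = pochhammer (-(\<alpha>+1)) m * pochhammer (-(\<alpha>+1) + real m) m"
      by (rule pochhammer_product')
    then show ?thesis unfolding e mult_2 by (simp add: algebra_simps)
  qed
  have g: "(\<alpha>+1) gchoose m = (-1)^m * pochhammer (-(\<alpha>+1)) m / fact m" by (rule gbinomial_pochhammer)
  have fd: "fact (2*m) = (2 ^ (2 * m) * pochhammer (1 / 2) m * fact m :: real)" by (rule fact_double)
  have f2: "fact (2 * Suc m) = (2::real) * pochhammer 3 (2*m)" using fact_SS3[of "2*m"] by simp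
  have pw: "(-2*x)^(2*m) = (4::real)^m" using x by (simp add: power_mult power_mult_distrib)
  have pos: "pochhammer (1/2::real) m > 0" "pochhammer (3::real) (2*m) > 0"
    by (auto intro: pochhammer_pos)
  have s: "(-1::real)^(Suc m + 1) = (-1)^m" by simp
  have f4: "(2::real)^(2*m) = 4^m" by (simp add: power_mult)
  show ?thesis unfolding l p2 g f2 pw s fd f4
    using pos by (simp add: field_simps power_mult flip: power_add mult_2)
qed

lemma odd_term:
  fixes \<alpha> x :: real
  assumes x: "x^2 = 1"
  shows "cstar \<alpha> x (2*m+3) = 2 * (pochhammer (-\<alpha>-1) (2*m+1) / pochhammer 3 (2*m+1) * (-2*x)^(2*m+1) / fact (2*m+1))"
proof -
  have e: "(2*m+3) div 2 = Suc m" by simp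
  have od: "\<not> even (2*m+3)" by simp
  have h: "hyp2F1 (- real (Suc m) + 1) (\<alpha> + 5 / 2 - real (Suc m)) (3 / 2) (x ^ 2)
      = pochhammer (real m - \<alpha>) m / pochhammer (3/2) m"
    using cv[of "3/2" m "\<alpha> + 5 / 2 - real (Suc m)"] x by (simp add: algebra_simps)
  have l: "cstar \<alpha> x (2*m+3) = 8 * (-1) ^ (Suc m + 1) / fact (2 * Suc m + 1) * (\<alpha> gchoose m) * (\<alpha> + 1) * x
      * (pochhammer (real m - \<alpha>) m / pochhammer (3/2) m)"
    unfolding cstar_def using h od by (simp add: e Let_def del: fact_Suc)
  have p2: "pochhammer (-\<alpha>-1) (2*m+1) = (-\<alpha>-1) * (pochhammer (-\<alpha>) m * pochhammer (real m - \<alpha>) m)"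
  proof -
    have a: "pochhammer (-\<alpha>) (2*m) = pochhammer (-\<alpha>) m * pochhammer (real m - \<alpha>) m"
      using pochhammer_product'[of "-\<alpha>" m m] by (simp add: mult_2)
    have b: "pochhammer (-\<alpha>-1) (Suc (2*m)) = (-\<alpha>-1) * pochhammer (-\<alpha>) (2*m)"
      by (simp add: pochhammer_rec)
    show ?thesis unfolding Suc_eq_plus1[symmetric] b a ..
  qed
  have g: "\<alpha> gchoose m = (-1)^m * pochhammer (-\<alpha>) m / fact m" by (rule gbinomial_pochhammer)
  have fd: "fact (2*m+1) = (4::real)^m * fact m * pochhammer (3/2) m" by (rule fact_odd)
  have f2: "fact (2 * Suc m + 1) = (2::real) * pochhammer 3 (2*m+1)" using fact_SS3[of "2*m+1"] by simp
  have pw: "(-2*x)^(2*m+1) = - 2 * (4::real)^m * x" using x by (simp add: power_mult power_mult_distrib)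
  have pos: "pochhammer (3/2::real) m > 0" "pochhammer (3::real) (2*m+1) > 0"
    by (auto intro: pochhammer_pos)
  have s: "(-1::real)^(Suc m + 1) = (-1)^m" by simp
  have s2: "((-1::real)^m)^2 = 1" by (simp add: power2_eq_square flip: power_add)
  show ?thesis unfolding l p2 g f2 pw s fd
    using pos by (simp add: field_simps s2)
qed

lemma h_summable:
  fixes a z :: real
  shows "summable (\<lambda>k. pochhammer a k / pochhammer 3 k * z^k / fact k)"
proof (rule summable_ratio_test[of "1/2" "nat \<lceil>4 * \<bar>z\<bar> * (\<bar>a\<bar> + 1)\<rceil>"])
  fix k assume k: "nat \<lceil>4 * \<bar>z\<bar> * (\<bar>a\<bar> + 1)\<rceil> \<le> k"
  let ?h = "\<lambda>k. pochhammer a k / pochhammer 3 k * z^k / fact k"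
  have pos: "pochhammer (3::real) k > 0" by (auto intro: pochhammer_pos)
  have rec: "?h (Suc k) = ?h k * ((a + real k) * z / ((3 + real k) * (real k + 1)))"
    using pos by (simp add: pochhammer_Suc field_simps)
  define K where "K = real k"
  have K: "K \<ge> 4 * \<bar>z\<bar> * (\<bar>a\<bar> + 1)" using k unfolding K_def by linarith
  have z0: "\<bar>z\<bar> \<ge> 0" "\<bar>a\<bar> \<ge> 0" by auto
  have P: "4 * \<bar>z\<bar> * (\<bar>a\<bar> + 1) = 4 * \<bar>z\<bar> * \<bar>a\<bar> + 4 * \<bar>z\<bar>" by (simp add: algebra_simps)
  have q1: "4 * \<bar>z\<bar> * \<bar>a\<bar> \<ge> 0" using z0 by simp
  have K0: "K \<ge> 0" "4 * \<bar>z\<bar> \<le> K" "4 * \<bar>z\<bar> * \<bar>a\<bar> \<le> K" using K z0 P q1 by linarith+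
  have "\<bar>a + K\<bar> \<le> \<bar>a\<bar> + K" using K0 by (simp add: abs_le_iff) linarith
  hence s1: "\<bar>a + K\<bar> * \<bar>z\<bar> \<le> (\<bar>a\<bar> + K) * \<bar>z\<bar>" by (rule mult_right_mono) simp
  have s2: "K * (4 * \<bar>z\<bar>) \<le> K * K" using K0 by (intro mult_left_mono) auto
  have s3: "(3 + K) * (K + 1) = K * K + 4 * K + 3" by (simp add: algebra_simps)
  have s1': "\<bar>a + K\<bar> * \<bar>z\<bar> \<le> \<bar>a\<bar> * \<bar>z\<bar> + K * \<bar>z\<bar>" using s1 by (simp add: distrib_right)
  have s2': "4 * (K * \<bar>z\<bar>) \<le> K * K" using s2 by (simp add: mult_ac)
  have s4: "4 * (\<bar>a\<bar> * \<bar>z\<bar>) \<le> K" using K0(3) by (simp add: mult_ac)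
  have "2 * (\<bar>a + K\<bar> * \<bar>z\<bar>) \<le> (3 + K) * (K + 1)"
  proof -
    have L: "\<And>X Y W Q. X \<le> Y + W \<Longrightarrow> 4*W \<le> Q \<Longrightarrow> 4*Y \<le> K \<Longrightarrow> 0 \<le> K \<Longrightarrow> 0 \<le> Q \<Longrightarrow> 2*X \<le> Q + 4*K + 3"
      by linarith
    show ?thesis unfolding s3 by (rule L[OF s1' s2' s4 K0(1) zero_le_square])
  qed
  hence ineq: "2 * \<bar>a + K\<bar> * \<bar>z\<bar> \<le> (3 + K) * (K + 1)" by (simp add: mult_ac)
  have Kp: "(3 + K) * (K + 1) > 0" using K0 by simp
  have "norm ((a + real k) * z / ((3 + real k) * (real k + 1))) = \<bar>a + K\<bar> * \<bar>z\<bar> / ((3 + K) * (K + 1))"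
    unfolding K_def[symmetric] real_norm_def abs_divide abs_mult[of "a+K"] abs_of_pos[OF Kp] ..
  also have "\<dots> \<le> 1/2" unfolding pos_divide_le_eq[OF Kp] using ineq by simp
  finally have "norm ((a + real k) * z / ((3 + real k) * (real k + 1))) \<le> 1/2" .
  then show "norm (?h (Suc k)) \<le> 1/2 * norm (?h k)"
    unfolding rec norm_mult mult.commute[of "1/2"] by (rule mult_left_mono) simp
qed simp

lemma main_x:
  fixes \<alpha> x :: real
  assumes x: "x^2 = 1"
  shows "(\<lambda>n. cstar \<alpha> x (Suc n)) sums (2 * hyp1F1 (- \<alpha> - 1) 3 (-2*x))"
proof -
  define h where "h k = pochhammer (-\<alpha>-1) k / pochhammer 3 k * (-2*x)^k / fact k" for k
  have eq: "cstar \<alpha> x (Suc (Suc k)) = 2 * h k" for k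
  proof (cases "even k")
    case True
    then obtain m where "k = 2*m" by blast
    then show ?thesis using even_term[OF x, of \<alpha> m] unfolding h_def by (simp add: add.commute)
  next
    case False
    then obtain m where km: "k = 2*m+1" using oddE by blast
    hence e: "Suc (Suc k) = 2*m+3" by simp
    show ?thesis unfolding e odd_term[OF x, of \<alpha> m] unfolding h_def km ..
  qed
  have "summable h" unfolding h_def by (rule h_summable)
  hence "(\<lambda>k. 2 * h k) sums (2 * suminf h)" by (intro sums_mult summable_sums)
  hence "(\<lambda>n. cstar \<alpha> x (Suc (Suc n))) sums (2 * suminf h)" by (simp add: eq)
  hence "(\<lambda>n. cstar \<alpha> x (Suc n)) sums (2 * suminf h + cstar \<alpha> x (Suc 0))"
    by (subst (asm) sums_Suc_iff)
  moreover have "cstar \<alpha> x (Suc 0) = 0" by (simp add: cstar_def)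
  moreover have "suminf h = hyp1F1 (- \<alpha> - 1) 3 (-2*x)" unfolding h_def hyp1F1_def ..
  ultimately show ?thesis by simp
qed

theorem mainTheorem6:
  fixes \<alpha> :: real
  assumes "\<alpha> > -1"
  shows "((\<lambda>n. cstar \<alpha> (-1) (Suc n)) sums (2 * hyp1F1 (- \<alpha> - 1) 3 2))
    \<and> ((\<lambda>n. cstar \<alpha> 1 (Suc n)) sums (2 * hyp1F1 (- \<alpha> - 1) 3 (-2)))"
  using main_x[of "-1" \<alpha>] main_x[of 1 \<alpha>] by simp

end
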